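(* Let $G$ be a torsion-free group, $\alpha$ a zero divisor in $\mathbb{F}_2[G]$ with $|supp(\alpha)|=4$ and $|S_\alpha|=10$, and $\beta$ a mate of $\alpha$. Then every vertex of $\mathcal{Z}(\alpha,\beta)$ has degree in $\{3,4,5,6,7,8,10\}$.
   Context: $supp(\gamma)=\{x\in G:\gamma_x\ne0\}$; $S_\alpha=\{h^{-1}h':h\ne h',\ h,h'\in supp(\alpha)\}$. A mate of $\alpha$ is a non-zero $\beta$ with $\alpha\beta=0$ of minimal support size among all non-zero $\beta'$ with $\alpha\beta'=0$. $Z(\alpha,\beta)$ is the multigraph with vertex set $supp(\beta)$ whose edges are the sets $\{(h,h',g,g'),(h',h,g',g)\}$ with $h,h'\in supp(\alpha)$, $g,g'\in supp(\beta)$, $g\ne g'$, $hg=h'g'$, each joining $g$ and $g'$. $\mathcal{Z}(\alpha,\beta)$ is the simple graph obtained from $Z(\alpha,\beta)$ by replacing each set of multiple edges between two vertices by a single edge (so $g\sim g'$ in $\mathcal{Z}$ iff they are joined by at least one edge in $Z$). *)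

theory Defs
  imports "HOL-Algebra.Group"
begin

text \<open>Elements of the group algebra F_2[G] are identified with their supports:
  a finitely supported function G -> F_2 is the same as a finite subset of carrier G.\<close>

definition f2_elem :: "('a, 'b) monoid_scheme \<Rightarrow> 'a set \<Rightarrow> bool" where
  "f2_elem G A \<longleftrightarrow> finite A \<and> A \<subseteq> carrier G"

definition f2_mult :: "('a, 'b) monoid_scheme \<Rightarrow> 'a set \<Rightarrow> 'a set \<Rightarrow> 'a set" where
  "f2_mult G A B = {x \<in> carrier G. odd (card {(h, g). h \<in> A \<and> g \<in> B \<and> h \<otimes>\<^bsub>G\<^esub> g = x})}"

definition torsion_free :: "('a, 'b) monoid_scheme \<Rightarrow> bool" where
  "torsion_free G \<longleftrightarrow>
     (\<forall>x \<in> carrier G. x \<noteq> \<one>\<^bsub>G\<^esub> \<longrightarrow> (\<forall>n::nat. n > 0 \<longrightarrow> x [^]\<^bsub>G\<^esub> n \<noteq> \<one>\<^bsub>G\<^esub>))"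

definition zero_divisor_f2 :: "('a, 'b) monoid_scheme \<Rightarrow> 'a set \<Rightarrow> bool" where
  "zero_divisor_f2 G A \<longleftrightarrow> f2_elem G A \<and> A \<noteq> {} \<and>
     (\<exists>B. f2_elem G B \<and> B \<noteq> {} \<and> f2_mult G A B = {})"

definition S_set :: "('a, 'b) monoid_scheme \<Rightarrow> 'a set \<Rightarrow> 'a set" where
  "S_set G A = {inv\<^bsub>G\<^esub> h \<otimes>\<^bsub>G\<^esub> h' | h h'. h \<in> A \<and> h' \<in> A \<and> h \<noteq> h'}"

definition is_mate :: "('a, 'b) monoid_scheme \<Rightarrow> 'a set \<Rightarrow> 'a set \<Rightarrow> bool" where
  "is_mate G A B \<longleftrightarrow> f2_elem G B \<and> B \<noteq> {} \<and> f2_mult G A B = {} \<and>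
     (\<forall>B'. f2_elem G B' \<and> B' \<noteq> {} \<and> f2_mult G A B' = {} \<longrightarrow> card B \<le> card B')"

text \<open>Adjacency in the simple graph \<Z>(alpha,beta): g ~ g' iff joined by at least one edge of Z(alpha,beta).\<close>
definition Z_adj :: "('a, 'b) monoid_scheme \<Rightarrow> 'a set \<Rightarrow> 'a set \<Rightarrow> 'a \<Rightarrow> 'a \<Rightarrow> bool" where
  "Z_adj G A B g g' \<longleftrightarrow> g \<in> B \<and> g' \<in> B \<and> g \<noteq> g' \<and>
     (\<exists>h \<in> A. \<exists>h' \<in> A. h \<otimes>\<^bsub>G\<^esub> g = h' \<otimes>\<^bsub>G\<^esub> g')"

definition Z_degree :: "('a, 'b) monoid_scheme \<Rightarrow> 'a set \<Rightarrow> 'a set \<Rightarrow> 'a \<Rightarrow> nat" where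
  "Z_degree G A B g = card {g'. Z_adj G A B g g'}"

end

theory Submission
  imports Defs
begin

definition pphi :: "('a, 'b) monoid_scheme \<Rightarrow> 'a \<times> 'a \<Rightarrow> 'a" where
  "pphi G p = inv\<^bsub>G\<^esub> (fst p) \<otimes>\<^bsub>G\<^esub> (snd p)"

definition pairsP :: "'a set \<Rightarrow> ('a \<times> 'a) set" where
  "pairsP A = {p. fst p \<in> A \<and> snd p \<in> A \<and> fst p \<noteq> snd p}"

definition sw :: "'a \<times> 'a \<Rightarrow> 'a \<times> 'a" where
  "sw p = (snd p, fst p)"

lemma card_image_remove:
  assumes fin: "finite P" and RP: "R \<subseteq> P" and w: "\<And>r. r \<in> R \<Longrightarrow> \<exists>p \<in> P - R. f r = f p"
  shows "card (f ` P) + card R \<le> card P"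
proof -
  have sub: "f ` P \<subseteq> f ` (P - R)"
  proof
    fix x assume "x \<in> f ` P"
    then obtain p where p: "p \<in> P" "x = f p" by blast
    show "x \<in> f ` (P - R)"
    proof (cases "p \<in> R")
      case True
      then obtain q where "q \<in> P - R" "f p = f q" using w by blast
      then show ?thesis using p by blast
    next
      case False then show ?thesis using p by blast
    qed
  qed
  have f1: "finite (P - R)" using fin by simp
  have "card (f ` P) \<le> card (f ` (P - R))" using sub f1 by (simp add: card_mono)
  also have "\<dots> \<le> card (P - R)" using f1 by (rule card_image_le)
  finally have c1: "card (f ` P) \<le> card (P - R)" .
  have fR: "finite R" using fin RP by (rule finite_subset[rotated])
  have c2: "card (P - R) = card P - card R" using fR RP by (rule card_Diff_subset)
  have c3: "card R \<le> card P" using fin RP by (simp add: card_mono)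
  show ?thesis using c1 c2 c3 by linarith
qed

lemma card_le2_sub:
  assumes "finite X" "card X \<le> 2"
  shows "\<exists>x y. X \<subseteq> {x, y}"
proof -
  have "card X = 0 \<or> card X = 1 \<or> card X = 2" using assms(2) by linarith
  then show ?thesis
  proof (elim disjE)
    assume "card X = 0" then have "X = {}" using assms(1) by simp
    then show ?thesis by blast
  next
    assume "card X = 1"
    then obtain x where "X = {x}" by (auto simp: card_1_singleton_iff)
    then show ?thesis by blast
  next
    assume "card X = 2"
    then obtain x y where "X = {x, y}" by (auto simp: card_2_iff)
    then show ?thesis by blast
  qed
qed

lemma card_pairsP:
  assumes fA: "finite A" and cA: "card A = 4"
  shows "card (pairsP A) = 12"
proof -
  have eq: "pairsP A = A \<times> A - (\<lambda>x. (x, x)) ` A"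
    unfolding pairsP_def by auto
  have sub: "(\<lambda>x. (x, x)) ` A \<subseteq> A \<times> A" by auto
  have c1: "card (A \<times> A) = 16" using cA by (simp add: card_cartesian_product)
  have inj: "inj_on (\<lambda>x. (x, x)) A" by (auto simp: inj_on_def)
  have c2: "card ((\<lambda>x. (x, x)) ` A) = 4" using card_image[OF inj] cA by simp
  have fD: "finite ((\<lambda>x. (x, x)) ` A)" using fA by simp
  have "card (A \<times> A - (\<lambda>x. (x, x)) ` A) = card (A \<times> A) - card ((\<lambda>x. (x, x)) ` A)"
    using fD sub by (rule card_Diff_subset)
  then show ?thesis unfolding eq using c1 c2 by simp
qed

lemma finite_pairsP: "finite A \<Longrightarrow> finite (pairsP A)"
  by (rule finite_subset[of _ "A \<times> A"]) (auto simp: pairsP_def)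

lemma four_in_two:
  assumes "v1 \<in> {x, y}" "v2 \<in> {x, y}" "v3 \<in> {x, y}" "v4 \<in> {x, y}"
  shows "(v1 = v2 \<and> v3 = v4) \<or> (v1 = v3 \<and> v2 = v4) \<or> (v1 = v4 \<and> v2 = v3) \<or>
      (v1 = v2 \<and> v1 = v3) \<or> (v1 = v2 \<and> v1 = v4) \<or> (v1 = v3 \<and> v1 = v4) \<or>
      (v2 = v3 \<and> v2 = v4)"
  using assms by auto

context group
begin

lemma mult_inv_cancel1 [simp]: "x \<in> carrier G \<Longrightarrow> y \<in> carrier G \<Longrightarrow> x \<otimes> (inv x \<otimes> y) = y"
  by (simp add: m_assoc[symmetric])

lemma mult_inv_cancel2 [simp]: "x \<in> carrier G \<Longrightarrow> y \<in> carrier G \<Longrightarrow> inv x \<otimes> (x \<otimes> y) = y"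
  by (simp add: m_assoc[symmetric])

lemma invariant_one:
  assumes tf: "torsion_free G" and y: "y \<in> carrier G" and X: "X \<subseteq> carrier G" "finite X" "z \<in> X"
    and inv: "\<And>x. x \<in> X \<Longrightarrow> y \<otimes> x \<in> X"
  shows "y = \<one>"
proof (rule ccontr)
  assume ne: "y \<noteq> \<one>"
  have zc: "z \<in> carrier G" using X by auto
  have f: "y [^] n \<otimes> z \<in> X" for n :: nat
  proof (induction n)
    case 0 then show ?case using X by auto
  next
    case (Suc n)
    have "y [^] Suc n \<otimes> z = (y \<otimes> y [^] n) \<otimes> z"
      using y by (simp only: nat_pow_Suc2)
    also have "\<dots> = y \<otimes> (y [^] n \<otimes> z)" using y zc by (simp add: m_assoc)
    finally show ?case using inv Suc by simp
  qed
  have "\<not> inj (\<lambda>n::nat. y [^] n \<otimes> z)"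
  proof
    assume "inj (\<lambda>n::nat. y [^] n \<otimes> z)"
    then have "infinite (range (\<lambda>n::nat. y [^] n \<otimes> z))"
      using finite_imageD by blast
    moreover have "range (\<lambda>n::nat. y [^] n \<otimes> z) \<subseteq> X" using f by auto
    ultimately show False using X finite_subset by blast
  qed
  then obtain n m :: nat where nm: "n \<noteq> m" "y [^] n \<otimes> z = y [^] m \<otimes> z"
    unfolding inj_def by blast
  have gen: "y [^] a = y [^] b \<Longrightarrow> a < b \<Longrightarrow> False" for a b :: nat
  proof -
    assume ab: "y [^] a = y [^] b" "a < b"
    have "y [^] b = y [^] a \<otimes> y [^] (b - a)" using ab(2) y
      by (simp add: nat_pow_mult)
    then have "y [^] (b - a) = \<one>" using ab(1) y by simp
    then show False using tf ne y ab(2) unfolding torsion_free_def by auto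
  qed
  have "y [^] n = y [^] m" using nm(2) zc y by simp
  then show False using gen nm(1) by (metis linorder_neqE_nat)
qed

lemma tf_pow2:
  assumes tf: "torsion_free G" and t: "t \<in> carrier G" and tt: "t \<otimes> t = \<one>"
  shows "t = \<one>"
proof (rule ccontr)
  assume "t \<noteq> \<one>"
  then have "t [^] (2::nat) \<noteq> \<one>" using tf t unfolding torsion_free_def by auto
  moreover have "t [^] (2::nat) = t \<otimes> t" using t by (simp add: numeral_2_eq_2)
  ultimately show False using tt by simp
qed

lemma pphi_closed: "p \<in> pairsP A \<Longrightarrow> A \<subseteq> carrier G \<Longrightarrow> pphi G p \<in> carrier G"
  unfolding pphi_def pairsP_def by (auto intro!: m_closed inv_closed)

lemma sw_in: "p \<in> pairsP A \<Longrightarrow> sw p \<in> pairsP A"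
  unfolding sw_def pairsP_def by auto

lemma sw_val:
  assumes "p \<in> pairsP A" "A \<subseteq> carrier G"
  shows "pphi G (sw p) = inv (pphi G p)"
proof -
  have c: "fst p \<in> carrier G" "snd p \<in> carrier G"
    using assms unfolding pairsP_def by auto
  show ?thesis unfolding sw_def pphi_def using c by (simp add: inv_mult_group)
qed

lemma sw_inj: "sw p = sw q \<longleftrightarrow> p = q"
  unfolding sw_def by (cases p, cases q) auto

lemma pphi_ne_one:
  assumes p: "p \<in> pairsP A" and A: "A \<subseteq> carrier G"
  shows "pphi G p \<noteq> \<one>"
proof
  assume h: "pphi G p = \<one>"
  have c: "fst p \<in> carrier G" "snd p \<in> carrier G" "fst p \<noteq> snd p"
    using p A unfolding pairsP_def by auto
  have "inv (fst p) \<otimes> snd p = \<one>" using h unfolding pphi_def by simp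
  then have "snd p = fst p \<otimes> \<one>" using inv_solve_left'[OF one_closed c(1) c(2)] by simp
  then show False using c by simp
qed

lemma no_swap:
  assumes tf: "torsion_free G" and p: "p \<in> pairsP A" and A: "A \<subseteq> carrier G"
  shows "pphi G (sw p) \<noteq> pphi G p"
proof
  assume eq: "pphi G (sw p) = pphi G p"
  let ?t = "pphi G p"
  have tc: "?t \<in> carrier G" using pphi_closed p A .
  have "inv ?t = ?t" using eq sw_val[OF p A] by simp
  then have "?t \<otimes> ?t = \<one>" using tc by (metis r_inv)
  then have "?t = \<one>" using tf_pow2 tf tc by blast
  then show False using pphi_ne_one p A by blast
qed

lemma sw_same: "p \<in> pairsP A \<Longrightarrow> q \<in> pairsP A \<Longrightarrow> A \<subseteq> carrier G \<Longrightarrow>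
   pphi G p = pphi G q \<Longrightarrow> pphi G (sw p) = pphi G (sw q)"
  using sw_val by simp

lemma pphi_cancel:
  assumes "(k1, b) \<in> pairsP A" "(k2, b) \<in> pairsP A" "A \<subseteq> carrier G"
    and e: "pphi G (k1, b) = pphi G (k2, b)"
  shows "k1 = k2"
proof -
  have c: "k1 \<in> carrier G" "k2 \<in> carrier G" "b \<in> carrier G"
    using assms unfolding pairsP_def by auto
  have "inv k1 \<otimes> b = inv k2 \<otimes> b" using e unfolding pphi_def by simp
  then have "inv k1 = inv k2" using c by simp
  then have "inv (inv k1) = inv (inv k2)" by simp
  then show ?thesis using c by simp
qed

lemma pphi_cancel2:
  assumes "(k, b1) \<in> pairsP A" "(k, b2) \<in> pairsP A" "A \<subseteq> carrier G"
    and e: "pphi G (k, b1) = pphi G (k, b2)"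
  shows "b1 = b2"
proof -
  have c: "k \<in> carrier G" "b1 \<in> carrier G" "b2 \<in> carrier G"
    using assms unfolding pairsP_def by auto
  have "inv k \<otimes> b1 = inv k \<otimes> b2" using e unfolding pphi_def by simp
  then have "k \<otimes> (inv k \<otimes> b1) = k \<otimes> (inv k \<otimes> b2)" by simp
  then show ?thesis using c by simp
qed

lemma three_fold:
  assumes tf: "torsion_free G" and A: "A \<subseteq> carrier G" "finite A"
    and cP: "card (pairsP A) = 12" and cS: "card (pphi G ` pairsP A) = 10"
    and p: "p1 \<in> pairsP A" "p2 \<in> pairsP A" "p3 \<in> pairsP A"
    and d: "p1 \<noteq> p2" "p1 \<noteq> p3" "p2 \<noteq> p3"
    and e: "pphi G p1 = pphi G p2" "pphi G p1 = pphi G p3"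
  shows False
proof -
  have ns1: "pphi G (sw p1) \<noteq> pphi G p1" using no_swap tf p(1) A(1) by blast
  have s12: "pphi G (sw p1) = pphi G (sw p2)" using sw_same p A(1) e by blast
  have s13: "pphi G (sw p1) = pphi G (sw p3)" using sw_same p A(1) e by blast
  have x: "\<And>q. pphi G q = pphi G p1 \<Longrightarrow> pphi G q \<noteq> pphi G (sw p1)" using ns1 by simp
  define R where "R = {p2, p3, sw p2, sw p3}"
  have dd1: "p2 \<noteq> sw p2"
  proof assume "p2 = sw p2" then show False using x[of p2] e s12 by simp qed
  have dd2: "p2 \<noteq> sw p3"
  proof assume "p2 = sw p3" then show False using x[of p2] e s13 by simp qed
  have dd3: "p3 \<noteq> sw p2"
  proof assume "p3 = sw p2" then show False using x[of p3] e s12 by simp qed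
  have dd4: "p3 \<noteq> sw p3"
  proof assume "p3 = sw p3" then show False using x[of p3] e s13 by simp qed
  have dd5: "sw p2 \<noteq> sw p3" using d(3) by (simp add: sw_inj)
  have cR: "card R = 4" unfolding R_def using dd1 dd2 dd3 dd4 dd5 d by simp
  have fin: "finite (pairsP A)" using A(2) by (rule finite_pairsP)
  have e1: "p1 \<noteq> sw p2"
  proof assume "p1 = sw p2" then show False using x[of p1] s12 by simp qed
  have e2: "p1 \<noteq> sw p3"
  proof assume "p1 = sw p3" then show False using x[of p1] s13 by simp qed
  have p1R: "p1 \<notin> R" unfolding R_def using d e1 e2 by simp
  have f1: "sw p1 \<noteq> p2"
  proof assume "sw p1 = p2" then show False using x[of p2] e by simp qed
  have f2: "sw p1 \<noteq> p3"
  proof assume "sw p1 = p3" then show False using x[of p3] e by simp qed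
  have sp1R: "sw p1 \<notin> R" unfolding R_def using d f1 f2 by (simp add: sw_inj)
  have RP: "R \<subseteq> pairsP A" unfolding R_def using p sw_in by blast
  have "card (pphi G ` pairsP A) + card R \<le> card (pairsP A)"
  proof (rule card_image_remove[OF fin RP])
    fix r assume "r \<in> R"
    then have "r = p2 \<or> r = p3 \<or> r = sw p2 \<or> r = sw p3" unfolding R_def by blast
    then show "\<exists>q \<in> pairsP A - R. pphi G r = pphi G q"
    proof (elim disjE)
      assume "r = p2" then show ?thesis using p1R p(1) e by (intro bexI[of _ p1]) auto
    next
      assume "r = p3" then show ?thesis using p1R p(1) e by (intro bexI[of _ p1]) auto
    next
      assume "r = sw p2" then show ?thesis using sp1R sw_in[OF p(1)] s12 by (intro bexI[of _ "sw p1"]) auto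
    next
      assume "r = sw p3" then show ?thesis using sp1R sw_in[OF p(1)] s13 by (intro bexI[of _ "sw p1"]) auto
    qed
  qed
  then show False using cR cP cS by simp
qed

lemma two_fold:
  assumes tf: "torsion_free G" and A: "A \<subseteq> carrier G" "finite A"
    and cP: "card (pairsP A) = 12" and cS: "card (pphi G ` pairsP A) = 10"
    and p: "p1 \<in> pairsP A" "p2 \<in> pairsP A" "q1 \<in> pairsP A" "q2 \<in> pairsP A"
    and d: "p1 \<noteq> p2" "q1 \<noteq> q2"
    and e: "pphi G p1 = pphi G p2" "pphi G q1 = pphi G q2"
    and n: "pphi G q1 \<noteq> pphi G p1" "pphi G q1 \<noteq> pphi G (sw p1)"
  shows False
proof -
  have ns1: "pphi G (sw p1) \<noteq> pphi G p1" using no_swap tf p(1) A(1) by blast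
  have s12: "pphi G (sw p1) = pphi G (sw p2)" using sw_same p A(1) e by blast
  define R where "R = {p2, sw p2, q2}"
  have dd1: "p2 \<noteq> sw p2"
  proof assume "p2 = sw p2" then show False using ns1 e s12 by simp qed
  have dd2: "q2 \<noteq> p2"
  proof assume "q2 = p2" then show False using n e by simp qed
  have dd3: "q2 \<noteq> sw p2"
  proof assume "q2 = sw p2" then show False using n e s12 by simp qed
  have cR: "card R = 3" unfolding R_def using dd1 dd2 dd3 by auto
  have fin: "finite (pairsP A)" using A(2) by (rule finite_pairsP)
  have a1: "p1 \<noteq> sw p2"
  proof assume "p1 = sw p2" then show False using ns1 s12 by simp qed
  have a2: "p1 \<noteq> q2"
  proof assume "p1 = q2" then show False using n e by simp qed
  have p1R: "p1 \<notin> R" unfolding R_def using d a1 a2 by simp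
  have b1: "sw p1 \<noteq> p2"
  proof assume "sw p1 = p2" then show False using ns1 e by simp qed
  have b2: "sw p1 \<noteq> q2"
  proof assume "sw p1 = q2" then show False using n e by simp qed
  have sp1R: "sw p1 \<notin> R" unfolding R_def using d b1 b2 by (simp add: sw_inj)
  have c1: "q1 \<noteq> p2"
  proof assume "q1 = p2" then show False using n e by simp qed
  have c2: "q1 \<noteq> sw p2"
  proof assume "q1 = sw p2" then show False using n s12 by simp qed
  have q1R: "q1 \<notin> R" unfolding R_def using d c1 c2 by simp
  have RP: "R \<subseteq> pairsP A" unfolding R_def using p sw_in by blast
  have "card (pphi G ` pairsP A) + card R \<le> card (pairsP A)"
  proof (rule card_image_remove[OF fin RP])
    fix r assume "r \<in> R"
    then have "r = p2 \<or> r = sw p2 \<or> r = q2" unfolding R_def by blast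
    then show "\<exists>q \<in> pairsP A - R. pphi G r = pphi G q"
    proof (elim disjE)
      assume "r = p2" then show ?thesis using p1R p(1) e by (intro bexI[of _ p1]) auto
    next
      assume "r = sw p2" then show ?thesis using sp1R sw_in[OF p(1)] s12 by (intro bexI[of _ "sw p1"]) auto
    next
      assume "r = q2" then show ?thesis using q1R p(3) e by (intro bexI[of _ q1]) auto
    qed
  qed
  then show False using cR cP cS by simp
qed

lemma four_pairs:
  assumes tf: "torsion_free G" and A: "A \<subseteq> carrier G" "finite A"
    and cP: "card (pairsP A) = 12" and cS: "card (pphi G ` pairsP A) = 10"
    and p: "(k1, b1) \<in> pairsP A" "(k2, b2) \<in> pairsP A" "(k3, b3) \<in> pairsP A" "(k4, b4) \<in> pairsP A"
    and db: "b1 \<noteq> b2" "b1 \<noteq> b3" "b1 \<noteq> b4" "b2 \<noteq> b3" "b2 \<noteq> b4" "b3 \<noteq> b4"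
    and e: "pphi G (k1, b1) = pphi G (k2, b2)" "pphi G (k3, b3) = pphi G (k4, b4)"
    and noK: "\<And>a b c d. a \<in> A \<Longrightarrow> b \<in> A \<Longrightarrow> c \<in> A \<Longrightarrow> d \<in> A \<Longrightarrow> a \<noteq> b \<Longrightarrow> a \<noteq> c \<Longrightarrow>
       a \<noteq> d \<Longrightarrow> b \<noteq> c \<Longrightarrow> b \<noteq> d \<Longrightarrow> c \<noteq> d \<Longrightarrow> pphi G (a, b) = pphi G (c, d) \<Longrightarrow> False"
  shows False
proof -
  have d12: "(k1, b1) \<noteq> (k2, b2)" using db by simp
  have d13: "(k1, b1) \<noteq> (k3, b3)" using db by simp
  have d23: "(k2, b2) \<noteq> (k3, b3)" using db by simp
  have d34: "(k3, b3) \<noteq> (k4, b4)" using db by simp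
  have s12: "pphi G (sw (k1, b1)) = pphi G (sw (k2, b2))" using sw_same p A(1) e by blast
  consider (same) "pphi G (k3, b3) = pphi G (k1, b1)"
    | (inverse) "pphi G (k3, b3) = pphi G (sw (k1, b1))"
    | (other) "pphi G (k3, b3) \<noteq> pphi G (k1, b1)" "pphi G (k3, b3) \<noteq> pphi G (sw (k1, b1))"
    by blast
  then show False
  proof cases
    case same
    show False
      by (rule three_fold[OF tf A cP cS p(1) p(2) p(3) d12 d13 d23 e(1)]) (use same in simp)
  next
    case other
    show False
      by (rule two_fold[OF tf A cP cS p(1) p(2) p(3) p(4) d12 d34 e(1) e(2) other])
  next
    case inverse
    have sp: "sw (k1, b1) \<in> pairsP A" "sw (k2, b2) \<in> pairsP A" using sw_in p by blast+
    have dsw: "sw (k1, b1) \<noteq> sw (k2, b2)" using d12 by (simp add: sw_inj)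
    have in3: "(k3, b3) = sw (k1, b1) \<or> (k3, b3) = sw (k2, b2)"
    proof (rule ccontr)
      assume "\<not> ?thesis"
      then have n: "sw (k1, b1) \<noteq> (k3, b3)" "sw (k2, b2) \<noteq> (k3, b3)" by auto
      show False
        by (rule three_fold[OF tf A cP cS sp(1) sp(2) p(3) dsw n s12]) (use inverse in simp)
    qed
    have in4: "(k4, b4) = sw (k1, b1) \<or> (k4, b4) = sw (k2, b2)"
    proof (rule ccontr)
      assume "\<not> ?thesis"
      then have n: "sw (k1, b1) \<noteq> (k4, b4)" "sw (k2, b2) \<noteq> (k4, b4)" by auto
      show False
        by (rule three_fold[OF tf A cP cS sp(1) sp(2) p(4) dsw n s12]) (use inverse e(2) in simp)
    qed
    have bb: "(b3 = k1 \<and> b4 = k2) \<or> (b3 = k2 \<and> b4 = k1)"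
      using in3 in4 db(6) by (auto simp: sw_def)
    have k12: "k1 \<noteq> k2"
    proof
      assume "k1 = k2"
      then have "b1 = b2" using pphi_cancel2[of k1 b1 A b2] p(1,2) A(1) e(1) by simp
      then show False using db(1) by simp
    qed
    have mem: "k1 \<in> A" "b1 \<in> A" "k2 \<in> A" "b2 \<in> A" "k1 \<noteq> b1" "k2 \<noteq> b2"
      using p(1,2) unfolding pairsP_def by auto
    have k1b2: "k1 \<noteq> b2" using bb db by auto
    have k2b1: "b1 \<noteq> k2" using bb db by auto
    show False
      by (rule noK[OF mem(1) mem(2) mem(3) mem(4) mem(5) k12 k1b2 k2b1 db(1) mem(6) e(1)])
  qed
qed

lemma no_K:
  assumes tf: "torsion_free G" and A: "A \<subseteq> carrier G" "card A = 4"
    and B: "B \<subseteq> carrier G" "finite B" "y0 \<in> B" and prod: "f2_mult G A B = {}"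
    and mem: "a \<in> A" "b \<in> A" "c \<in> A" "d \<in> A"
    and dis: "a \<noteq> b" "a \<noteq> c" "a \<noteq> d" "b \<noteq> c" "b \<noteq> d" "c \<noteq> d"
    and e: "pphi G (a, b) = pphi G (c, d)"
  shows False
proof -
  have fA: "finite A" using A(2) by (metis card.infinite zero_neq_numeral)
  have sub: "{a, b, c, d} \<subseteq> A" using mem by auto
  have c4: "card {a, b, c, d} = 4" using dis by simp
  have Aeq: "A = {a, b, c, d}" using card_subset_eq[OF fA sub] c4 A(2) by simp
  have ac: "a \<in> carrier G" and bc: "b \<in> carrier G" and cc: "c \<in> carrier G" and dc: "d \<in> carrier G"
    using mem A(1) by auto
  define v where "v = c \<otimes> inv a"
  have vc: "v \<in> carrier G" unfolding v_def using ac cc by simp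
  have cv: "v \<otimes> a = c" unfolding v_def using ac cc by (simp add: m_assoc)
  have e': "inv c \<otimes> d = inv a \<otimes> b" using e unfolding pphi_def by simp
  have "d = c \<otimes> (inv a \<otimes> b)"
    using inv_solve_left'[of "inv a \<otimes> b" c d] e' ac bc cc dc by simp
  then have dv: "v \<otimes> b = d" unfolding v_def using ac bc cc by (simp add: m_assoc)
  have v1: "v \<noteq> \<one>"
  proof
    assume "v = \<one>" then have "c = a" using cv ac by simp
    then show False using dis by simp
  qed
  define X where "X z = {(h, y). h \<in> {a, b} \<and> y \<in> B \<and> h \<otimes> y = z}" for z
  define Y where "Y z = {(h, y). h \<in> {c, d} \<and> y \<in> B \<and> h \<otimes> y = z}" for z
  define W where "W z = {(h, y). h \<in> A \<and> y \<in> B \<and> h \<otimes> y = z}" for z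
  have finX: "finite (X z)" for z
    by (rule finite_subset[of _ "{a, b} \<times> B"]) (auto simp: X_def B(2))
  have finY: "finite (Y z)" for z
    by (rule finite_subset[of _ "{c, d} \<times> B"]) (auto simp: Y_def B(2))
  have evW: "even (card (W z))" if "z \<in> carrier G" for z
  proof -
    have "z \<notin> f2_mult G A B" using prod by simp
    then show ?thesis using that unfolding f2_mult_def W_def by simp
  qed
  have WXY: "W z = X z \<union> Y z" for z unfolding W_def X_def Y_def Aeq by auto
  have XYd: "X z \<inter> Y z = {}" for z unfolding X_def Y_def using dis by auto
  have Yim: "Y z = (\<lambda>(h, y). (v \<otimes> h, y)) ` X (inv v \<otimes> z)" if zc: "z \<in> carrier G" for z
  proof
    show "Y z \<subseteq> (\<lambda>(h, y). (v \<otimes> h, y)) ` X (inv v \<otimes> z)"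
    proof
      fix q assume q: "q \<in> Y z"
      then obtain h y where hy: "q = (h, y)" "h \<in> {c, d}" "y \<in> B" "h \<otimes> y = z"
        unfolding Y_def by blast
      have yc: "y \<in> carrier G" using hy(3) B(1) by auto
      obtain h0 where h0: "h0 \<in> {a, b}" "v \<otimes> h0 = h" using hy(2) cv dv by blast
      have h0c: "h0 \<in> carrier G" using h0(1) ac bc by auto
      have "z = v \<otimes> (h0 \<otimes> y)" using hy(4) h0(2) vc h0c yc by (metis m_assoc)
      then have "inv v \<otimes> z = h0 \<otimes> y" using vc h0c yc by simp
      then have "(h0, y) \<in> X (inv v \<otimes> z)" unfolding X_def using h0(1) hy(3) by simp
      then show "q \<in> (\<lambda>(h, y). (v \<otimes> h, y)) ` X (inv v \<otimes> z)"
        using hy(1) h0(2) by (auto intro!: image_eqI[of _ _ "(h0, y)"])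
    qed
  next
    show "(\<lambda>(h, y). (v \<otimes> h, y)) ` X (inv v \<otimes> z) \<subseteq> Y z"
    proof
      fix q assume "q \<in> (\<lambda>(h, y). (v \<otimes> h, y)) ` X (inv v \<otimes> z)"
      then obtain h y where hy: "q = (v \<otimes> h, y)" "h \<in> {a, b}" "y \<in> B" "h \<otimes> y = inv v \<otimes> z"
        unfolding X_def by auto
      have yc: "y \<in> carrier G" using hy(3) B(1) by auto
      have hc: "h \<in> carrier G" using hy(2) ac bc by auto
      have "(v \<otimes> h) \<otimes> y = v \<otimes> (inv v \<otimes> z)" using hy(4) vc hc yc by (simp add: m_assoc)
      then have "(v \<otimes> h) \<otimes> y = z" using vc zc by simp
      moreover have "v \<otimes> h \<in> {c, d}" using hy(2) cv dv by auto
      ultimately show "q \<in> Y z" unfolding Y_def using hy(1) hy(3) by simp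
    qed
  qed
  have injv: "inj_on (\<lambda>(h, y). (v \<otimes> h, y)) (X w)" for w
  proof (rule inj_onI)
    fix p q assume p: "p \<in> X w" and q: "q \<in> X w"
      and eq: "(\<lambda>(h, y). (v \<otimes> h, y)) p = (\<lambda>(h, y). (v \<otimes> h, y)) q"
    obtain h1 y1 where p': "p = (h1, y1)" "h1 \<in> {a, b}" using p unfolding X_def by blast
    obtain h2 y2 where q': "q = (h2, y2)" "h2 \<in> {a, b}" using q unfolding X_def by blast
    have h1c: "h1 \<in> carrier G" "h2 \<in> carrier G" using p'(2) q'(2) ac bc by auto
    have "v \<otimes> h1 = v \<otimes> h2" "y1 = y2" using eq p'(1) q'(1) by auto
    then have "inv v \<otimes> (v \<otimes> h1) = inv v \<otimes> (v \<otimes> h2)" "y1 = y2" by auto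
    then have "h1 = h2" "y1 = y2" using vc h1c by auto
    then show "p = q" using p'(1) q'(1) by simp
  qed
  have cardW: "card (W z) = card (X z) + card (X (inv v \<otimes> z))" if zc: "z \<in> carrier G" for z
  proof -
    have "card (W z) = card (X z) + card (Y z)"
      unfolding WXY using card_Un_disjoint[OF finX finY XYd] by simp
    moreover have "card (Y z) = card (X (inv v \<otimes> z))"
      unfolding Yim[OF zc] by (rule card_image[OF injv])
    ultimately show ?thesis by simp
  qed
  define C where "C = {z \<in> carrier G. odd (card (X z))}"
  show False
  proof (cases "C = {}")
    case False
    then obtain z0 where z0: "z0 \<in> C" by blast
    have Cinv: "inv v \<otimes> z \<in> C" if "z \<in> C" for z
    proof -
      have zc: "z \<in> carrier G" and oz: "odd (card (X z))" using that unfolding C_def by auto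
      have "even (card (X z) + card (X (inv v \<otimes> z)))" using evW[OF zc] cardW[OF zc] by simp
      then have "odd (card (X (inv v \<otimes> z)))" using oz by simp
      then show ?thesis unfolding C_def using zc vc by simp
    qed
    have Csub: "C \<subseteq> (\<lambda>(h, y). h \<otimes> y) ` ({a, b} \<times> B)"
    proof
      fix z assume "z \<in> C"
      then have "odd (card (X z))" unfolding C_def by auto
      then have "card (X z) \<noteq> 0" by (metis even_zero)
      then have "X z \<noteq> {}" by auto
      then obtain h y where "(h, y) \<in> X z" by auto
      then show "z \<in> (\<lambda>(h, y). h \<otimes> y) ` ({a, b} \<times> B)"
        unfolding X_def by (auto intro!: image_eqI[of _ _ "(h, y)"])
    qed
    have finC: "finite C" using Csub by (rule finite_subset) (simp add: B(2))
    have "inv v = \<one>"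
      by (rule invariant_one[OF tf inv_closed[OF vc] _ finC z0 Cinv]) (auto simp: C_def)
    then show False using v1 vc by simp
  next
    case True
    define w where "w = inv b \<otimes> a"
    have wc: "w \<in> carrier G" unfolding w_def using ac bc by simp
    have Binv: "w \<otimes> y \<in> B" if y: "y \<in> B" for y
    proof -
      have yc: "y \<in> carrier G" using y B(1) by auto
      let ?z = "a \<otimes> y"
      have zc: "?z \<in> carrier G" using ac yc by simp
      have ev: "even (card (X ?z))" using True zc unfolding C_def by auto
      have ay: "(a, y) \<in> X ?z" unfolding X_def using y by simp
      have "X ?z \<noteq> {(a, y)}" using ev by auto
      then have "\<exists>q \<in> X ?z. q \<noteq> (a, y)" using ay by blast
      then obtain q where q: "q \<in> X ?z" "q \<noteq> (a, y)" by blast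
      obtain h y' where "q = (h, y')" by (cases q)
      then have hy: "(h, y') \<in> X ?z" "(h, y') \<noteq> (a, y)" using q by auto
      have hy': "h \<in> {a, b}" "y' \<in> B" "h \<otimes> y' = a \<otimes> y" using hy(1) unfolding X_def by auto
      have y'c: "y' \<in> carrier G" using hy'(2) B(1) by auto
      have hb: "h = b"
      proof (rule ccontr)
        assume "h \<noteq> b"
        then have ha: "h = a" using hy'(1) by simp
        then have "inv a \<otimes> (a \<otimes> y') = inv a \<otimes> (a \<otimes> y)" using hy'(3) by simp
        then have "y' = y" using ac yc y'c by simp
        then show False using hy(2) ha by simp
      qed
      have "y' = inv b \<otimes> (a \<otimes> y)" using hy'(3) hb bc y'c ac yc
        by (metis mult_inv_cancel2)
      then have "y' = w \<otimes> y" unfolding w_def using ac bc yc by (simp add: m_assoc)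
      then show ?thesis using hy'(2) by simp
    qed
    have "w = \<one>" by (rule invariant_one[OF tf wc B(1) B(2) B(3) Binv])
    then have "inv b \<otimes> a = \<one>" unfolding w_def .
    then have "a = b \<otimes> \<one>" using inv_solve_left'[OF one_closed bc ac] by simp
    then show False using dis bc by simp
  qed
qed

lemma main_grp:
  assumes tf: "torsion_free G" and zd: "zero_divisor_f2 G A" and cA: "card A = 4"
    and cS0: "card (S_set G A) = 10" and mate: "is_mate G A B" and gB: "g \<in> B"
  shows "Z_degree G A B g \<in> {3, 4, 5, 6, 7, 8, 10}"
proof -
  have A: "A \<subseteq> carrier G" "finite A" using zd unfolding zero_divisor_f2_def f2_elem_def by auto
  have B: "B \<subseteq> carrier G" "finite B" and prod: "f2_mult G A B = {}"
    using mate unfolding is_mate_def f2_elem_def by auto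
  have gc: "g \<in> carrier G" using gB B(1) by auto
  have Seq: "S_set G A = pphi G ` pairsP A"
  proof (intro equalityI subsetI)
    fix x assume "x \<in> S_set G A"
    then obtain h h' where hh: "x = inv h \<otimes> h'" "h \<in> A" "h' \<in> A" "h \<noteq> h'"
      unfolding S_set_def by blast
    then have "(h, h') \<in> pairsP A" "x = pphi G (h, h')" unfolding pairsP_def pphi_def by auto
    then show "x \<in> pphi G ` pairsP A" by blast
  next
    fix x assume "x \<in> pphi G ` pairsP A"
    then obtain p where p: "p \<in> pairsP A" "x = pphi G p" by blast
    then have "x = inv (fst p) \<otimes> snd p" "fst p \<in> A" "snd p \<in> A" "fst p \<noteq> snd p"
      unfolding pphi_def pairsP_def by auto
    then show "x \<in> S_set G A" unfolding S_set_def by blast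
  qed
  have cS: "card (pphi G ` pairsP A) = 10" using cS0 Seq by simp
  have cP: "card (pairsP A) = 12" using card_pairsP A(2) cA by blast
  have finP: "finite (pairsP A)" using A(2) by (rule finite_pairsP)
  define Q where "Q = {p \<in> pairsP A. pphi G p \<otimes> g \<in> B}"
  have Qsub: "Q \<subseteq> pairsP A" unfolding Q_def by auto
  have finQ: "finite Q" using finP Qsub by (rule finite_subset[rotated])
  have Qc: "pphi G ` Q \<subseteq> carrier G" using Qsub pphi_closed A(1) by blast
  have Nq: "{g'. Z_adj G A B g g'} = (\<lambda>s. s \<otimes> g) ` (pphi G ` Q)"
  proof (intro equalityI subsetI)
    fix g' assume "g' \<in> {g'. Z_adj G A B g g'}"
    then obtain h h' where z: "g' \<in> B" "g \<noteq> g'" "h \<in> A" "h' \<in> A" "h \<otimes> g = h' \<otimes> g'"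
      unfolding Z_adj_def by blast
    have hc: "h \<in> carrier G" "h' \<in> carrier G" "g' \<in> carrier G" using z A(1) B(1) by auto
    have "inv h' \<otimes> (h' \<otimes> g') = g'" using hc by simp
    then have g'eq: "g' = inv h' \<otimes> (h \<otimes> g)" using z(5) by simp
    then have g'eq2: "g' = pphi G (h', h) \<otimes> g" unfolding pphi_def using hc gc by (simp add: m_assoc)
    have hne: "h' \<noteq> h"
    proof
      assume "h' = h"
      then have "inv h \<otimes> (h \<otimes> g) = inv h \<otimes> (h \<otimes> g')" using z(5) by simp
      then have "g = g'" using hc gc by simp
      then show False using z(2) by simp
    qed
    have "(h', h) \<in> Q" unfolding Q_def pairsP_def using z(1,3,4) hne g'eq2 by auto
    then show "g' \<in> (\<lambda>s. s \<otimes> g) ` (pphi G ` Q)" using g'eq2 by blast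
  next
    fix x assume "x \<in> (\<lambda>s. s \<otimes> g) ` (pphi G ` Q)"
    then obtain p where p: "p \<in> Q" "x = pphi G p \<otimes> g" by blast
    obtain a b where ab: "p = (a, b)" by (cases p)
    have pP: "p \<in> pairsP A" using p(1) Qsub by auto
    have abm: "a \<in> A" "b \<in> A" "a \<noteq> b" using pP ab unfolding pairsP_def by auto
    have abc: "a \<in> carrier G" "b \<in> carrier G" using abm A(1) by auto
    have xB: "x \<in> B" using p unfolding Q_def by auto
    have xg: "g \<noteq> x"
    proof
      assume "g = x"
      then have "pphi G p \<otimes> g = g" using p(2) by simp
      then have "pphi G p = \<one>" using gc pphi_closed[OF pP A(1)] by simp
      then show False using pphi_ne_one[OF pP A(1)] by simp
    qed
    have "a \<otimes> x = a \<otimes> (inv a \<otimes> (b \<otimes> g))" using p(2) ab abc gc unfolding pphi_def by (simp add: m_assoc)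
    then have "b \<otimes> g = a \<otimes> x" using abc gc by simp
    then show "x \<in> {g'. Z_adj G A B g g'}" unfolding Z_adj_def using gB xB xg abm by blast
  qed
  have injc: "inj_on (\<lambda>s. s \<otimes> g) (carrier G)"
    by (rule inj_onI) (use gc in simp)
  have injg: "inj_on (\<lambda>s. s \<otimes> g) (pphi G ` Q)" using inj_on_subset[OF injc Qc] .
  have deg: "Z_degree G A B g = card (pphi G ` Q)"
    unfolding Z_degree_def Nq by (rule card_image[OF injg])
  have dle: "card (pphi G ` Q) \<le> 10"
    using card_mono[OF finite_imageI[OF finP] image_mono[OF Qsub], of "pphi G"] cS by simp
  have Qclosed: "p \<in> Q" if qa: "p \<in> pairsP A" "pphi G p \<in> pphi G ` Q" for p
  proof -
    obtain q where "q \<in> Q" "pphi G p = pphi G q" using qa(2) by blast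
    then show ?thesis unfolding Q_def using qa(1) by auto
  qed
  have col: "odd (card {k. (k, b) \<in> Q})" if bA: "b \<in> A" for b
  proof -
    define z where "z = b \<otimes> g"
    have bc: "b \<in> carrier G" using bA A(1) by auto
    have zc: "z \<in> carrier G" unfolding z_def using bc gc by simp
    define W where "W = {(h, y). h \<in> A \<and> y \<in> B \<and> h \<otimes> y = z}"
    have evW: "even (card W)"
    proof -
      have "z \<notin> f2_mult G A B" using prod by simp
      then show ?thesis using zc unfolding f2_mult_def W_def by simp
    qed
    define Col where "Col = {k. (k, b) \<in> Q}"
    have ColA: "Col \<subseteq> A - {b}" unfolding Col_def Q_def pairsP_def by auto
    have finCol: "finite Col" using ColA A(2) by (meson finite_Diff finite_subset)
    have Weq: "W = insert (b, g) ((\<lambda>k. (k, inv k \<otimes> z)) ` Col)"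
    proof (intro equalityI subsetI)
      fix q assume "q \<in> W"
      then obtain h y where hy: "q = (h, y)" "h \<in> A" "y \<in> B" "h \<otimes> y = z" unfolding W_def by auto
      have hc: "h \<in> carrier G" "y \<in> carrier G" using hy A(1) B(1) by auto
      show "q \<in> insert (b, g) ((\<lambda>k. (k, inv k \<otimes> z)) ` Col)"
      proof (cases "h = b")
        case True
        then have "inv b \<otimes> (b \<otimes> y) = inv b \<otimes> (b \<otimes> g)" using hy(4) unfolding z_def by simp
        then have "y = g" using bc hc gc by simp
        then show ?thesis using hy(1) True by simp
      next
        case False
        have yz: "y = inv h \<otimes> z" using hy(4) hc by (metis mult_inv_cancel2)
        have "pphi G (h, b) \<otimes> g = inv h \<otimes> (b \<otimes> g)" unfolding pphi_def using hc bc gc by (simp add: m_assoc)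
        then have "pphi G (h, b) \<otimes> g = y" using yz unfolding z_def by simp
        then have "(h, b) \<in> Q" unfolding Q_def pairsP_def using hy(2,3) bA False by auto
        then have "h \<in> Col" unfolding Col_def by simp
        then show ?thesis using hy(1) yz by blast
      qed
    next
      fix q assume q: "q \<in> insert (b, g) ((\<lambda>k. (k, inv k \<otimes> z)) ` Col)"
      show "q \<in> W"
      proof (cases "q = (b, g)")
        case True then show ?thesis unfolding W_def z_def using bA gB by simp
      next
        case False
        then obtain k where k: "k \<in> Col" "q = (k, inv k \<otimes> z)" using q by auto
        have kQ: "(k, b) \<in> Q" using k(1) unfolding Col_def by simp
        have kA: "k \<in> A" using kQ unfolding Q_def pairsP_def by auto
        have kc: "k \<in> carrier G" using kA A(1) by auto
        have "pphi G (k, b) \<otimes> g \<in> B" using kQ unfolding Q_def by simp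
        moreover have "pphi G (k, b) \<otimes> g = inv k \<otimes> z" unfolding pphi_def z_def using kc bc gc by (simp add: m_assoc)
        ultimately have "inv k \<otimes> z \<in> B" by simp
        moreover have "k \<otimes> (inv k \<otimes> z) = z" using kc zc by simp
        ultimately show ?thesis unfolding W_def using k(2) kA by simp
      qed
    qed
    have nin: "(b, g) \<notin> (\<lambda>k. (k, inv k \<otimes> z)) ` Col" using ColA by auto
    have inj: "inj_on (\<lambda>k. (k, inv k \<otimes> z)) Col" by (rule inj_onI) simp
    have "card W = Suc (card Col)"
      unfolding Weq using finCol nin card_image[OF inj] by simp
    then show ?thesis using evW unfolding Col_def by simp
  qed
  have noK: "False" if "a \<in> A" "b \<in> A" "c \<in> A" "d \<in> A" "a \<noteq> b" "a \<noteq> c"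
       "a \<noteq> d" "b \<noteq> c" "b \<noteq> d" "c \<noteq> d" "pphi G (a, b) = pphi G (c, d)" for a b c d
    by (rule no_K[OF tf A(1) cA B(1) B(2) gB prod that])
  have d9: "card (pphi G ` Q) \<noteq> 9"
  proof
    assume c9: "card (pphi G ` Q) = 9"
    have QS: "pphi G ` Q \<subseteq> pphi G ` pairsP A" using Qsub by auto
    obtain t0 where t0: "t0 \<in> pphi G ` pairsP A" "t0 \<notin> pphi G ` Q"
    proof (rule ccontr)
      assume "\<not> thesis"
      then have "pphi G ` pairsP A \<subseteq> pphi G ` Q" using that by blast
      then have "pphi G ` pairsP A = pphi G ` Q" using QS by blast
      then show False using c9 cS by simp
    qed
    obtain a b where ab: "(a, b) \<in> pairsP A" "t0 = pphi G (a, b)" using t0(1) by auto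
    have finS: "finite (pphi G ` pairsP A)" using finP by simp
    have QE: "pphi G ` Q = pphi G ` pairsP A - {t0}"
    proof -
      have s1: "pphi G ` Q \<subseteq> pphi G ` pairsP A - {t0}" using QS t0(2) by blast
      have c1: "card (pphi G ` pairsP A - {t0}) = 9" using cS t0(1) finS by simp
      show ?thesis using card_subset_eq[OF _ s1] finS c1 c9 by simp
    qed
    have abm: "a \<in> A" "b \<in> A" "a \<noteq> b" using ab(1) unfolding pairsP_def by auto
    have ColEq: "{k. (k, b) \<in> Q} = A - {a, b}"
    proof (intro equalityI subsetI)
      fix k assume "k \<in> {k. (k, b) \<in> Q}"
      then have kQ: "(k, b) \<in> Q" by simp
      then have "k \<in> A" "k \<noteq> b" unfolding Q_def pairsP_def by auto
      moreover have "k \<noteq> a"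
      proof
        assume "k = a" then have "t0 \<in> pphi G ` Q" using kQ ab(2) by blast
        then show False using t0(2) by simp
      qed
      ultimately show "k \<in> A - {a, b}" by simp
    next
      fix k assume k: "k \<in> A - {a, b}"
      have kP: "(k, b) \<in> pairsP A" using k abm unfolding pairsP_def by auto
      have "pphi G (k, b) \<noteq> t0"
      proof
        assume "pphi G (k, b) = t0"
        then have "k = a" using pphi_cancel[OF kP ab(1) A(1)] ab(2) by simp
        then show False using k by simp
      qed
      then have "pphi G (k, b) \<in> pphi G ` Q" unfolding QE using kP by blast
      then show "k \<in> {k. (k, b) \<in> Q}" using Qclosed kP by simp
    qed
    have "card (A - {a, b}) = 2"
    proof -
      have "{a, b} \<subseteq> A" using abm by auto
      then have "card (A - {a, b}) = card A - card {a, b}"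
        using card_Diff_subset by (metis finite.emptyI finite_insert)
      then show ?thesis using cA abm(3) by simp
    qed
    then show False using col[OF abm(2)] ColEq by simp
  qed
  have d2: "\<not> card (pphi G ` Q) \<le> 2"
  proof
    assume c2: "card (pphi G ` Q) \<le> 2"
    obtain x y where xy: "pphi G ` Q \<subseteq> {x, y}" using card_le2_sub[OF finite_imageI[OF finQ] c2] by blast
    have "card A = Suc 3" using cA by simp
    then obtain b1 A' where A1: "A = insert b1 A'" "b1 \<notin> A'" "card A' = 3"
      unfolding card_Suc_eq by blast
    have "\<exists>x y z. A' = {x, y, z} \<and> x \<noteq> y \<and> y \<noteq> z \<and> x \<noteq> z"
      using A1(3) card_3_iff by blast
    then obtain b2 b3 b4 where A2: "A' = {b2, b3, b4}" "b2 \<noteq> b3" "b3 \<noteq> b4" "b2 \<noteq> b4"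
      by blast
    have bA: "b1 \<in> A" "b2 \<in> A" "b3 \<in> A" "b4 \<in> A" using A1 A2 by auto
    have db: "b1 \<noteq> b2" "b1 \<noteq> b3" "b1 \<noteq> b4" "b2 \<noteq> b3" "b2 \<noteq> b4" "b3 \<noteq> b4"
      using A1 A2 by auto
    have ex: "\<exists>k. (k, b) \<in> Q" if "b \<in> A" for b
    proof (rule ccontr)
      assume "\<not> ?thesis"
      then have "{k. (k, b) \<in> Q} = {}" by auto
      then show False using col[OF that] by simp
    qed
    obtain k1 where k1: "(k1, b1) \<in> Q" using ex[OF bA(1)] by blast
    obtain k2 where k2: "(k2, b2) \<in> Q" using ex[OF bA(2)] by blast
    obtain k3 where k3: "(k3, b3) \<in> Q" using ex[OF bA(3)] by blast
    obtain k4 where k4: "(k4, b4) \<in> Q" using ex[OF bA(4)] by blast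
    have p: "(k1, b1) \<in> pairsP A" "(k2, b2) \<in> pairsP A" "(k3, b3) \<in> pairsP A" "(k4, b4) \<in> pairsP A"
      using k1 k2 k3 k4 Qsub by auto
    have v: "pphi G (k1, b1) \<in> {x, y}" "pphi G (k2, b2) \<in> {x, y}"
      "pphi G (k3, b3) \<in> {x, y}" "pphi G (k4, b4) \<in> {x, y}"
      using xy k1 k2 k3 k4 by auto
    let ?v1 = "pphi G (k1, b1)" and ?v2 = "pphi G (k2, b2)" and ?v3 = "pphi G (k3, b3)" and ?v4 = "pphi G (k4, b4)"
    have "(?v1 = ?v2 \<and> ?v3 = ?v4) \<or> (?v1 = ?v3 \<and> ?v2 = ?v4) \<or> (?v1 = ?v4 \<and> ?v2 = ?v3) \<or>
      (?v1 = ?v2 \<and> ?v1 = ?v3) \<or> (?v1 = ?v2 \<and> ?v1 = ?v4) \<or> (?v1 = ?v3 \<and> ?v1 = ?v4) \<or>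
      (?v2 = ?v3 \<and> ?v2 = ?v4)"
      using four_in_two[OF v] .
    then show False
    proof (elim disjE conjE)
      assume ee: "?v1 = ?v2" "?v3 = ?v4"
      show False by (rule four_pairs[OF tf A cP cS p(1) p(2) p(3) p(4) db(1) db(2) db(3) db(4) db(5) db(6) ee(1) ee(2) noK])
    next
      assume ee: "?v1 = ?v3" "?v2 = ?v4"
      show False by (rule four_pairs[OF tf A cP cS p(1) p(3) p(2) p(4) db(2) db(1) db(3) db(4)[symmetric] db(6) db(5) ee(1) ee(2) noK])
    next
      assume ee: "?v1 = ?v4" "?v2 = ?v3"
      show False by (rule four_pairs[OF tf A cP cS p(1) p(4) p(2) p(3) db(3) db(1) db(2) db(5)[symmetric] db(6)[symmetric] db(4) ee(1) ee(2) noK])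
    next
      assume "?v1 = ?v2" "?v1 = ?v3"
      then show False using three_fold[OF tf A cP cS p(1) p(2) p(3)] db by simp
    next
      assume "?v1 = ?v2" "?v1 = ?v4"
      then show False using three_fold[OF tf A cP cS p(1) p(2) p(4)] db by simp
    next
      assume "?v1 = ?v3" "?v1 = ?v4"
      then show False using three_fold[OF tf A cP cS p(1) p(3) p(4)] db by simp
    next
      assume "?v2 = ?v3" "?v2 = ?v4"
      then show False using three_fold[OF tf A cP cS p(2) p(3) p(4)] db by simp
    qed
  qed
  have "card (pphi G ` Q) = 3 \<or> card (pphi G ` Q) = 4 \<or> card (pphi G ` Q) = 5 \<or>
    card (pphi G ` Q) = 6 \<or> card (pphi G ` Q) = 7 \<or> card (pphi G ` Q) = 8 \<or> card (pphi G ` Q) = 10"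
    using dle d9 d2 by linarith
  then show ?thesis unfolding deg by auto
qed

end

theorem mainTheorem19:
  fixes G :: "('a, 'b) monoid_scheme" and A B :: "'a set" and g :: 'a
  assumes "group G"
    and "torsion_free G"
    and "zero_divisor_f2 G A"
    and "card A = 4"
    and "card (S_set G A) = 10"
    and "is_mate G A B"
    and "g \<in> B"
  shows "Z_degree G A B g \<in> {3, 4, 5, 6, 7, 8, 10}"
  using group.main_grp[OF assms] .

end
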